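(* Let $T=\sum_{k=0}^{N-1}q_kX^k$ be a circulant bistochastic matrix ($\vec q$ a probability vector), with eigen-decomposition $T=\sum_{n=0}^{N-1}\xi_n|x_n\rangle\langle x_n|$, where $|x_n\rangle=\frac1{\sqrt N}\sum_j\omega^{jn}|j\rangle$ and $\xi_n=\sum_k\omega^{-nk}q_k$. Then $T\in\mathcal{A}_N^C$ if and only if there exist logarithms $\ell_n$ ($e^{\ell_n}=\xi_n$, $n=1,\dots,N-1$) with $\overline{\ell_n}=\ell_{-n\oplus N}$ such that for every $m=1,\dots,N-1$ $$t_m=\frac1N\sum_{n=1}^{N-1}\omega^{mn}\,\ell_n$$ is real and non-negative. In that case $T=\exp(\sum_{m=1}^{N-1}t_m\mathcal{K}_m)$.
   Context: Let $N\ge2$, $\omega=e^{2\pi i/N}$, $X$ the $N\times N$ cyclic shift $X|j\rangle=|j\oplus1\rangle$ (addition mod $N$), $\mathcal{K}_m=X^m-\mathbb{I}_N$. $\mathcal{A}_N^C$ is the set of matrices $\exp(\sum_{m=1}^{N-1}t_m\mathcal{K}_m)$ with all $t_m\ge0$. *)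

theory Defs
  imports "HOL-Analysis.Analysis"
begin

text \<open>N x N complex matrices are represented as functions nat => nat => complex;
  only the entries with indices < N are relevant.\<close>

type_synonym cmat = "nat \<Rightarrow> nat \<Rightarrow> complex"

definition mat_id :: cmat where
  "mat_id = (\<lambda>i j. if i = j then 1 else 0)"

definition mat_mult :: "nat \<Rightarrow> cmat \<Rightarrow> cmat \<Rightarrow> cmat" where
  "mat_mult N A B = (\<lambda>i j. \<Sum>k<N. A i k * B k j)"

fun mat_pow :: "nat \<Rightarrow> cmat \<Rightarrow> nat \<Rightarrow> cmat" where
  "mat_pow N A 0 = mat_id"
| "mat_pow N A (Suc n) = mat_mult N (mat_pow N A n) A"

definition mat_exp :: "nat \<Rightarrow> cmat \<Rightarrow> cmat" where
  "mat_exp N A = (\<lambda>i j. \<Sum>k. mat_pow N A k i j / of_nat (fact k))"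

definition mat_eq :: "nat \<Rightarrow> cmat \<Rightarrow> cmat \<Rightarrow> bool" where
  "mat_eq N A B \<longleftrightarrow> (\<forall>i<N. \<forall>j<N. A i j = B i j)"

text \<open>Cyclic shift X|j> = |j+1 mod N>, i.e. X_{ij} = 1 iff i = (j+1) mod N.\<close>
definition shift :: "nat \<Rightarrow> cmat" where
  "shift N = (\<lambda>i j. if i = (j + 1) mod N then 1 else 0)"

definition Kgen :: "nat \<Rightarrow> nat \<Rightarrow> cmat" where
  "Kgen N m = (\<lambda>i j. mat_pow N (shift N) m i j - mat_id i j)"

definition omega :: "nat \<Rightarrow> complex" where
  "omega N = exp (2 * of_real pi * \<i> / of_nat N)"

definition in_AC :: "nat \<Rightarrow> cmat \<Rightarrow> bool" where
  "in_AC N T \<longleftrightarrow> (\<exists>t :: nat \<Rightarrow> real. (\<forall>m\<in>{1..N-1}. t m \<ge> 0) \<and>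
      mat_eq N T (mat_exp N (\<lambda>i j. \<Sum>m=1..N-1. complex_of_real (t m) * Kgen N m i j)))"

definition circulant :: "nat \<Rightarrow> (nat \<Rightarrow> real) \<Rightarrow> cmat" where
  "circulant N q = (\<lambda>i j. \<Sum>k<N. complex_of_real (q k) * mat_pow N (shift N) k i j)"

definition xi :: "nat \<Rightarrow> (nat \<Rightarrow> real) \<Rightarrow> nat \<Rightarrow> complex" where
  "xi N q n = (\<Sum>k<N. inverse (omega N) ^ (n * k) * complex_of_real (q k))"

definition tcoef :: "nat \<Rightarrow> (nat \<Rightarrow> complex) \<Rightarrow> nat \<Rightarrow> complex" where
  "tcoef N l m = (1 / of_nat N) * (\<Sum>n=1..N-1. omega N ^ (m * n) * l n)"

end

theory Submission
  imports Defs
begin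

lemma omega_pow: "omega N ^ j = exp (2 * of_real pi * \<i> * of_nat j / of_nat N)"
  unfolding omega_def exp_of_nat_mult[symmetric] by (simp add: algebra_simps)

lemma omega_pow_eq: "0 < N \<Longrightarrow> omega N ^ a = omega N ^ b \<longleftrightarrow> a mod N = b mod N"
  unfolding omega_pow by (rule complex_root_unity_eq) simp

lemma omega_nz: "omega N \<noteq> 0" by (simp add: omega_def)

lemma omega_N: "0 < N \<Longrightarrow> omega N ^ N = 1"
  using omega_pow_eq[of N N 0] by simp

lemma omega_cnj: "cnj (omega N) = inverse (omega N)"
  unfolding omega_def by (simp add: exp_cnj exp_minus[symmetric])

lemma orth:
  assumes N: "0 < N"
  shows "(\<Sum>l<N. omega N ^ (a*l) * inverse (omega N) ^ (b*l)) = (if a mod N = b mod N then of_nat N else 0)"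
proof -
  define z where "z = omega N ^ a * inverse (omega N ^ b)"
  have eq: "omega N ^ (a*l) * inverse (omega N) ^ (b*l) = z ^ l" for l
    by (simp add: z_def power_mult power_mult_distrib power_inverse)
  have zN: "z ^ N = 1"
  proof -
    have "z ^ N = (omega N ^ N) ^ a * inverse ((omega N ^ N) ^ b)"
      unfolding z_def power_mult_distrib power_inverse by (simp flip: power_mult add: mult.commute)
    then show ?thesis using omega_N[OF N] by simp
  qed
  have z1: "z = 1 \<longleftrightarrow> a mod N = b mod N"
    using omega_pow_eq[OF N, of a b] omega_nz by (auto simp: z_def field_simps)
  show ?thesis
  proof (cases "z = 1")
    case True then show ?thesis using z1 by (simp add: eq)
  next
    case False then show ?thesis using z1 zN by (simp add: eq geometric_sum)
  qed
qed


definition Fm :: "nat \<Rightarrow> (nat \<Rightarrow> complex) \<Rightarrow> cmat" where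
  "Fm N a = (\<lambda>i j. (1 / of_nat N) * (\<Sum>n<N. omega N ^ (i*n) * inverse (omega N) ^ (j*n) * a n))"

lemma orth2:
  assumes N: "0 < N" and "n < N" "n' < N"
  shows "(\<Sum>l<N. omega N ^ (n'*l) * inverse (omega N) ^ (n*l)) = (if n' = n then of_nat N else 0)"
  using orth[OF N, of n' n] assms by simp

lemma Fm_mult:
  assumes N: "0 < N"
  shows "mat_mult N (Fm N a) (Fm N b) i j = Fm N (\<lambda>n. a n * b n) i j"
proof -
  let ?w = "omega N" and ?v = "inverse (omega N)"
  define c where "c = (1 / of_nat N) * (1 / (of_nat N :: complex))"
  have "mat_mult N (Fm N a) (Fm N b) i j =
     (\<Sum>l<N. \<Sum>n<N. \<Sum>n'<N. c * (?w^(i*n) * ?v^(j*n') * a n * b n') * (?w^(n'*l) * ?v^(n*l)))"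
    unfolding mat_mult_def Fm_def c_def
    apply (simp add: sum_product sum_distrib_left mult_ac)
    apply (rule sum.cong[OF refl])
    apply (rule sum.swap)
    done
  also have "\<dots> = (\<Sum>n<N. \<Sum>n'<N. c * (?w^(i*n) * ?v^(j*n') * a n * b n') * (\<Sum>l<N. ?w^(n'*l) * ?v^(n*l)))"
    apply (rule trans[OF sum.swap])
    apply (rule sum.cong[OF refl])
    apply (rule trans[OF sum.swap])
    apply (rule sum.cong[OF refl])
    apply (simp add: sum_distrib_left)
    done
  also have "\<dots> = (\<Sum>n<N. \<Sum>n'<N. c * (?w^(i*n) * ?v^(j*n') * a n * b n') * (if n' = n then of_nat N else 0))"
    by (intro sum.cong refl) (simp add: orth2[OF N])
  also have "\<dots> = (\<Sum>n<N. c * (?w^(i*n) * ?v^(j*n) * a n * b n) * of_nat N)"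
    by (simp add: if_distrib sum.delta cong: if_cong)
  also have "\<dots> = Fm N (\<lambda>n. a n * b n) i j"
    unfolding Fm_def c_def using N by (simp add: sum_distrib_left mult_ac)
  finally show ?thesis .
qed


lemma Fm_id:
  assumes N: "0 < N" and "i < N" "j < N"
  shows "Fm N (\<lambda>_. 1) i j = mat_id i j"
  using orth[OF N, of i j] assms unfolding Fm_def mat_id_def by (simp add: mult.commute)

lemma Fm_cong: "(\<And>n. n < N \<Longrightarrow> a n = b n) \<Longrightarrow> Fm N a i j = Fm N b i j"
  unfolding Fm_def by (intro arg_cong2[where f="(*)"] refl sum.cong) auto

lemma Fm_pow:
  assumes N: "0 < N" and A: "\<forall>i<N. \<forall>j<N. A i j = Fm N a i j"
  shows "\<forall>i<N. \<forall>j<N. mat_pow N A k i j = Fm N (\<lambda>n. a n ^ k) i j"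
proof (induction k)
  case 0
  then show ?case using Fm_id[OF N] by simp
next
  case (Suc k)
  show ?case
  proof (intro allI impI)
    fix i j assume ij: "i < N" "j < N"
    have "mat_pow N A (Suc k) i j = (\<Sum>l<N. mat_pow N A k i l * A l j)"
      by (simp add: mat_mult_def)
    also have "\<dots> = (\<Sum>l<N. Fm N (\<lambda>n. a n ^ k) i l * Fm N a l j)"
      using Suc ij A by (intro sum.cong refl) auto
    also have "\<dots> = Fm N (\<lambda>n. a n ^ k * a n) i j"
      using Fm_mult[OF N, of "\<lambda>n. a n ^ k" a i j] by (simp add: mat_mult_def)
    also have "\<dots> = Fm N (\<lambda>n. a n ^ Suc k) i j"
      by (simp add: mult.commute)
    finally show "mat_pow N A (Suc k) i j = Fm N (\<lambda>n. a n ^ Suc k) i j" .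
  qed
qed

lemma Fm_shift:
  assumes N: "0 < N" and ij: "i < N" "j < N"
  shows "shift N i j = Fm N (\<lambda>n. inverse (omega N) ^ n) i j"
proof -
  have "Fm N (\<lambda>n. inverse (omega N) ^ n) i j
     = (1 / of_nat N) * (\<Sum>n<N. omega N ^ (i*n) * inverse (omega N) ^ ((j+1)*n))"
    unfolding Fm_def by (simp add: power_add algebra_simps)
  also have "\<dots> = (if i mod N = (j+1) mod N then 1 else 0)"
    using orth[OF N, of i "Suc j"] N by simp
  finally show ?thesis using ij by (simp add: shift_def)
qed

lemma Fm_sum: "Fm N (\<lambda>n. \<Sum>m\<in>S. c m * f m n) i j = (\<Sum>m\<in>S. c m * Fm N (f m) i j)"
  unfolding Fm_def
  by (simp add: sum_distrib_left sum_distrib_right mult_ac sum.swap[of _ S])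

lemma Fm_diff: "Fm N (\<lambda>n. f n - g n) i j = Fm N f i j - Fm N g i j"
  unfolding Fm_def by (simp add: algebra_simps sum_subtractf)

lemma Fm_shiftpow:
  assumes N: "0 < N" and ij: "i < N" "j < N"
  shows "mat_pow N (shift N) m i j = Fm N (\<lambda>n. inverse (omega N) ^ (m*n)) i j"
  using Fm_pow[OF N, of "shift N" "\<lambda>n. inverse (omega N) ^ n" m] Fm_shift[OF N] ij
  by (simp add: power_mult mult.commute)

lemma Fm_Kgen:
  assumes N: "0 < N" and ij: "i < N" "j < N"
  shows "Kgen N m i j = Fm N (\<lambda>n. inverse (omega N) ^ (m*n) - 1) i j"
  using Fm_shiftpow[OF assms] Fm_id[OF assms] by (simp add: Kgen_def Fm_diff)

definition lam :: "nat \<Rightarrow> (nat \<Rightarrow> real) \<Rightarrow> nat \<Rightarrow> complex" where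
  "lam N t n = (\<Sum>m=1..N-1. complex_of_real (t m) * (inverse (omega N) ^ (m*n) - 1))"

lemma Fm_L:
  assumes N: "0 < N" and ij: "i < N" "j < N"
  shows "(\<Sum>m=1..N-1. complex_of_real (t m) * Kgen N m i j) = Fm N (lam N t) i j"
  unfolding lam_def Fm_sum using Fm_Kgen[OF assms] by simp

lemma Fm_exp:
  assumes N: "0 < N" and A: "\<forall>i<N. \<forall>j<N. A i j = Fm N a i j" and ij: "i < N" "j < N"
  shows "mat_exp N A i j = Fm N (\<lambda>n. exp (a n)) i j"
proof -
  have P: "mat_pow N A k i j / of_nat (fact k) =
     (\<Sum>n<N. (1 / of_nat N) * (omega N ^ (i*n) * inverse (omega N) ^ (j*n)) * (a n ^ k / of_nat (fact k)))" for k
    using Fm_pow[OF N A, of k] ij unfolding Fm_def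
    by (simp add: sum_distrib_left sum_divide_distrib mult_ac)
  have E: "(\<lambda>k. a n ^ k / of_nat (fact k)) sums exp (a n)" for n
    using exp_converges[of "a n"] by (simp add: scaleR_conv_of_real divide_inverse mult.commute)
  have "(\<lambda>k. mat_pow N A k i j / of_nat (fact k)) sums
     (\<Sum>n<N. (1 / of_nat N) * (omega N ^ (i*n) * inverse (omega N) ^ (j*n)) * exp (a n))"
    unfolding P by (intro sums_sum sums_mult E)
  then have "mat_exp N A i j = (\<Sum>n<N. (1 / of_nat N) * (omega N ^ (i*n) * inverse (omega N) ^ (j*n)) * exp (a n))"
    unfolding mat_exp_def by (simp add: sums_iff)
  also have "\<dots> = Fm N (\<lambda>n. exp (a n)) i j"
    unfolding Fm_def by (simp add: sum_distrib_left mult_ac)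
  finally show ?thesis .
qed

lemma Fm_circ:
  assumes N: "0 < N" and ij: "i < N" "j < N"
  shows "circulant N q i j = Fm N (xi N q) i j"
proof -
  have "circulant N q i j = (\<Sum>k<N. complex_of_real (q k) * Fm N (\<lambda>n. inverse (omega N) ^ (k*n)) i j)"
    unfolding circulant_def using Fm_shiftpow[OF assms] by simp
  also have "\<dots> = Fm N (\<lambda>n. \<Sum>k<N. complex_of_real (q k) * inverse (omega N) ^ (k*n)) i j"
    by (rule Fm_sum[symmetric])
  also have "\<dots> = Fm N (xi N q) i j"
    unfolding xi_def by (intro Fm_cong) (simp add: mult_ac)
  finally show ?thesis .
qed

lemma Fm_inv:
  assumes N: "0 < N" and n0: "n0 < N"
  shows "(\<Sum>i<N. Fm N a i 0 * inverse (omega N) ^ (i*n0)) = a n0"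
proof -
  have "(\<Sum>i<N. Fm N a i 0 * inverse (omega N) ^ (i*n0))
      = (\<Sum>i<N. \<Sum>n<N. (1 / of_nat N) * a n * (omega N ^ (n*i) * inverse (omega N) ^ (n0*i)))"
    unfolding Fm_def by (simp add: sum_distrib_left sum_distrib_right mult_ac)
  also have "\<dots> = (\<Sum>n<N. (1 / of_nat N) * a n * (\<Sum>i<N. omega N ^ (n*i) * inverse (omega N) ^ (n0*i)))"
    by (subst sum.swap) (simp add: sum_distrib_left)
  also have "\<dots> = (\<Sum>n<N. (1 / of_nat N) * a n * (if n = n0 then of_nat N else 0))"
    using n0 by (intro sum.cong refl) (simp add: orth2[OF N])
  also have "\<dots> = a n0" using N n0 by (simp add: if_distrib sum.delta cong: if_cong)
  finally show ?thesis .
qed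

lemma Fm_inj:
  assumes N: "0 < N" and E: "\<forall>i<N. \<forall>j<N. Fm N a i j = Fm N b i j" and n: "n < N"
  shows "a n = b n"
  using Fm_inv[OF N n, of a] Fm_inv[OF N n, of b] E N by simp


lemma sum_1_to:
  assumes "0 < (N::nat)" "g 0 = 0"
  shows "sum g {1..N-1} = sum g {..<N}"
proof -
  have "{..<N} = insert 0 {1..N-1}" using assms(1) by auto
  then show ?thesis using assms(2) by simp
qed

lemma lam_tcoef:
  assumes N: "0 < N" and R: "\<forall>m\<in>{1..N-1}. tcoef N l m \<in> \<real>" and n: "n < N"
  shows "lam N (\<lambda>m. Re (tcoef N l m)) n = (if n = 0 then 0 else l n)"
proof -
  let ?w = "omega N" and ?v = "inverse (omega N)"
  have "lam N (\<lambda>m. Re (tcoef N l m)) n = (\<Sum>m=1..N-1. tcoef N l m * (?v^(m*n) - 1))"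
    unfolding lam_def using R by (intro sum.cong refl) (auto elim!: Reals_cases)
  also have "\<dots> = (\<Sum>m=1..N-1. \<Sum>n'=1..N-1. (1 / of_nat N) * l n' * (?w^(n'*m) * (?v^(m*n) - 1)))"
    unfolding tcoef_def by (simp add: sum_distrib_left sum_distrib_right mult_ac)
  also have "\<dots> = (\<Sum>n'=1..N-1. (1 / of_nat N) * l n' * (\<Sum>m=1..N-1. ?w^(n'*m) * (?v^(m*n) - 1)))"
    by (subst sum.swap) (simp add: sum_distrib_left)
  also have "\<dots> = (\<Sum>n'=1..N-1. (1 / of_nat N) * l n' * (if n' = n then of_nat N else 0))"
  proof (intro sum.cong refl)
    fix n' assume n': "n' \<in> {1..N-1}"
    have "(\<Sum>m=1..N-1. ?w^(n'*m) * (?v^(m*n) - 1)) = (\<Sum>m<N. ?w^(n'*m) * (?v^(m*n) - 1))"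
      by (rule sum_1_to[OF N]) simp
    also have "\<dots> = (\<Sum>m<N. ?w^(n'*m) * ?v^(n*m)) - (\<Sum>m<N. ?w^(n'*m) * ?v^(0*m))"
      by (simp add: algebra_simps sum_subtractf)
    also have "\<dots> = (if n' = n then of_nat N else 0)"
    proof -
      have nd: "n' mod N \<noteq> 0" "n' < N" using n' N by auto
      show ?thesis using orth2[OF N n nd(2)] orth[OF N, of n' 0] nd by auto
    qed
    finally show "(1 / of_nat N) * l n' * (\<Sum>m=1..N-1. ?w^(n'*m) * (?v^(m*n) - 1)) =
        (1 / of_nat N) * l n' * (if n' = n then of_nat N else 0)" by simp
  qed
  also have "\<dots> = (if n = 0 then 0 else l n)"
    using N n by (simp add: if_distrib sum.delta cong: if_cong)
  finally show ?thesis .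
qed

lemma tcoef_lam:
  assumes N: "0 < N" and m: "m \<in> {1..N-1}"
  shows "tcoef N (lam N t) m = complex_of_real (t m)"
proof -
  let ?w = "omega N" and ?v = "inverse (omega N)"
  have "tcoef N (lam N t) m = (1 / of_nat N) * (\<Sum>n<N. ?w^(m*n) * lam N t n)"
    unfolding tcoef_def by (subst sum_1_to[OF N]) (auto simp: lam_def)
  also have "\<dots> = (1 / of_nat N) * (\<Sum>n<N. \<Sum>m'=1..N-1. complex_of_real (t m') * (?w^(m*n) * ?v^(m'*n) - ?w^(m*n) * ?v^(0*n)))"
    unfolding lam_def by (simp add: sum_distrib_left algebra_simps)
  also have "\<dots> = (1 / of_nat N) * (\<Sum>m'=1..N-1. complex_of_real (t m') * ((\<Sum>n<N. ?w^(m*n) * ?v^(m'*n)) - (\<Sum>n<N. ?w^(m*n) * ?v^(0*n))))"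
    apply (rule arg_cong[where f="\<lambda>x. (1 / of_nat N) * x"])
    apply (subst sum.swap)
    apply (simp add: sum_distrib_left sum_subtractf right_diff_distrib)
    done
  also have "\<dots> = (1 / of_nat N) * (\<Sum>m'=1..N-1. complex_of_real (t m') * (if m' = m then of_nat N else 0))"
  proof (rule arg_cong2[where f="(*)"], rule refl, rule sum.cong, rule refl)
    fix m' assume m': "m' \<in> {1..N-1}"
    show "complex_of_real (t m') * ((\<Sum>n<N. ?w^(m*n) * ?v^(m'*n)) - (\<Sum>n<N. ?w^(m*n) * ?v^(0*n))) =
        complex_of_real (t m') * (if m' = m then of_nat N else 0)"
    proof -
      have nd: "m mod N \<noteq> 0" "m < N" "m' < N" using m N m' by auto
      show ?thesis using orth2[OF N nd(3) nd(2)] orth[OF N, of m 0] nd by auto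
    qed
  qed
  also have "\<dots> = complex_of_real (t m)"
    using N m by (simp add: if_distrib sum.delta cong: if_cong)
  finally show ?thesis .
qed

lemma cnj_lam:
  assumes N: "0 < N" and n: "n \<in> {1..N-1}"
  shows "cnj (lam N t n) = lam N t ((N - n) mod N)"
proof -
  have mod: "(N - n) mod N = N - n" using n by auto
  have key: "inverse (omega N) ^ (m * (N - n)) = omega N ^ (m * n)" for m
  proof -
    have e: "m * n + m * (N - n) = N * m" using n by (auto simp: add_mult_distrib2[symmetric])
    have "omega N ^ (m * n) * omega N ^ (m * (N - n)) = omega N ^ (N * m)"
      by (simp only: power_add[symmetric] e)
    also have "\<dots> = (omega N ^ N) ^ m" by (rule power_mult)
    finally have "omega N ^ (m * n) * omega N ^ (m * (N - n)) = (omega N ^ N) ^ m" .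
    then have "omega N ^ (m * n) * omega N ^ (m * (N - n)) = 1" using omega_N[OF N] by simp
    then show ?thesis using omega_nz by (simp add: power_inverse field_simps)
  qed
  have c: "inverse (cnj (omega N)) = omega N" by (simp add: omega_cnj)
  show ?thesis unfolding lam_def mod
    by (simp add: key c)
qed


theorem theorem2:
  fixes N :: nat and q :: "nat \<Rightarrow> real"
  assumes "N \<ge> 2"
    and "\<forall>k<N. q k \<ge> 0"
    and "(\<Sum>k<N. q k) = 1"
  shows "(in_AC N (circulant N q) \<longleftrightarrow>
          (\<exists>l :: nat \<Rightarrow> complex.
             (\<forall>n\<in>{1..N-1}. exp (l n) = xi N q n) \<and>
             (\<forall>n\<in>{1..N-1}. cnj (l n) = l ((N - n) mod N)) \<and>
             (\<forall>m\<in>{1..N-1}. tcoef N l m \<in> \<real> \<and> Re (tcoef N l m) \<ge> 0)))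
     \<and> (\<forall>l :: nat \<Rightarrow> complex.
             (\<forall>n\<in>{1..N-1}. exp (l n) = xi N q n) \<and>
             (\<forall>n\<in>{1..N-1}. cnj (l n) = l ((N - n) mod N)) \<and>
             (\<forall>m\<in>{1..N-1}. tcoef N l m \<in> \<real> \<and> Re (tcoef N l m) \<ge> 0)
           \<longrightarrow> mat_eq N (circulant N q)
                 (mat_exp N (\<lambda>i j. \<Sum>m=1..N-1. complex_of_real (Re (tcoef N l m)) * Kgen N m i j)))"
proof -
  have N: "0 < N" using assms(1) by simp
  have xi0: "xi N q 0 = 1"
    unfolding xi_def using assms(3) by (simp flip: of_real_sum)
  have P2: "\<forall>l :: nat \<Rightarrow> complex.
             (\<forall>n\<in>{1..N-1}. exp (l n) = xi N q n) \<and>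
             (\<forall>n\<in>{1..N-1}. cnj (l n) = l ((N - n) mod N)) \<and>
             (\<forall>m\<in>{1..N-1}. tcoef N l m \<in> \<real> \<and> Re (tcoef N l m) \<ge> 0)
           \<longrightarrow> mat_eq N (circulant N q)
                 (mat_exp N (\<lambda>i j. \<Sum>m=1..N-1. complex_of_real (Re (tcoef N l m)) * Kgen N m i j))"
  proof (intro allI impI)
    fix l :: "nat \<Rightarrow> complex"
    assume H: "(\<forall>n\<in>{1..N-1}. exp (l n) = xi N q n) \<and>
             (\<forall>n\<in>{1..N-1}. cnj (l n) = l ((N - n) mod N)) \<and>
             (\<forall>m\<in>{1..N-1}. tcoef N l m \<in> \<real> \<and> Re (tcoef N l m) \<ge> 0)"
    define t where "t = (\<lambda>m. Re (tcoef N l m))"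
    have R: "\<forall>m\<in>{1..N-1}. tcoef N l m \<in> \<real>" using H by blast
    have lamv: "exp (lam N t n) = xi N q n" if n: "n < N" for n
      using lam_tcoef[OF N R n] H n xi0 unfolding t_def by auto
    have L: "\<forall>i<N. \<forall>j<N. (\<Sum>m=1..N-1. complex_of_real (t m) * Kgen N m i j) = Fm N (lam N t) i j"
      using Fm_L[OF N] by blast
    show "mat_eq N (circulant N q)
                 (mat_exp N (\<lambda>i j. \<Sum>m=1..N-1. complex_of_real (Re (tcoef N l m)) * Kgen N m i j))"
      unfolding mat_eq_def
    proof (intro allI impI)
      fix i j assume ij: "i < N" "j < N"
      have "circulant N q i j = Fm N (xi N q) i j" by (rule Fm_circ[OF N ij])
      also have "\<dots> = Fm N (\<lambda>n. exp (lam N t n)) i j" by (rule Fm_cong) (simp add: lamv)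
      also have "\<dots> = mat_exp N (\<lambda>i j. \<Sum>m=1..N-1. complex_of_real (t m) * Kgen N m i j) i j"
        by (rule Fm_exp[OF N L ij, symmetric])
      finally show "circulant N q i j = mat_exp N (\<lambda>i j. \<Sum>m=1..N-1. complex_of_real (Re (tcoef N l m)) * Kgen N m i j) i j"
        unfolding t_def .
    qed
  qed
  have P1: "in_AC N (circulant N q) \<longleftrightarrow>
          (\<exists>l :: nat \<Rightarrow> complex.
             (\<forall>n\<in>{1..N-1}. exp (l n) = xi N q n) \<and>
             (\<forall>n\<in>{1..N-1}. cnj (l n) = l ((N - n) mod N)) \<and>
             (\<forall>m\<in>{1..N-1}. tcoef N l m \<in> \<real> \<and> Re (tcoef N l m) \<ge> 0))"
  proof
    assume "in_AC N (circulant N q)"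
    then obtain t where t0: "\<forall>m\<in>{1..N-1}. t m \<ge> 0"
      and E: "mat_eq N (circulant N q) (mat_exp N (\<lambda>i j. \<Sum>m=1..N-1. complex_of_real (t m) * Kgen N m i j))"
      unfolding in_AC_def by blast
    have L: "\<forall>i<N. \<forall>j<N. (\<Sum>m=1..N-1. complex_of_real (t m) * Kgen N m i j) = Fm N (lam N t) i j"
      using Fm_L[OF N] by blast
    have FF: "\<forall>i<N. \<forall>j<N. Fm N (xi N q) i j = Fm N (\<lambda>n. exp (lam N t n)) i j"
    proof (intro allI impI)
      fix i j assume ij: "i < N" "j < N"
      have "Fm N (xi N q) i j = circulant N q i j" using Fm_circ[OF N ij] by simp
      also have "\<dots> = mat_exp N (\<lambda>i j. \<Sum>m=1..N-1. complex_of_real (t m) * Kgen N m i j) i j"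
        using E ij unfolding mat_eq_def by blast
      also have "\<dots> = Fm N (\<lambda>n. exp (lam N t n)) i j" by (rule Fm_exp[OF N L ij])
      finally show "Fm N (xi N q) i j = Fm N (\<lambda>n. exp (lam N t n)) i j" .
    qed
    have ex: "exp (lam N t n) = xi N q n" if "n < N" for n
      using Fm_inj[OF N FF that] by simp
    show "\<exists>l :: nat \<Rightarrow> complex.
             (\<forall>n\<in>{1..N-1}. exp (l n) = xi N q n) \<and>
             (\<forall>n\<in>{1..N-1}. cnj (l n) = l ((N - n) mod N)) \<and>
             (\<forall>m\<in>{1..N-1}. tcoef N l m \<in> \<real> \<and> Re (tcoef N l m) \<ge> 0)"
    proof (intro exI conjI ballI)
      fix n assume "n \<in> {1..N-1}"
      then show "exp (lam N t n) = xi N q n" using ex N by auto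
    next
      fix n assume "n \<in> {1..N-1}"
      then show "cnj (lam N t n) = lam N t ((N - n) mod N)" by (rule cnj_lam[OF N])
    next
      fix m assume m: "m \<in> {1..N-1}"
      show "tcoef N (lam N t) m \<in> \<real>" using tcoef_lam[OF N m] by simp
      show "Re (tcoef N (lam N t) m) \<ge> 0" using tcoef_lam[OF N m] t0 m by simp
    qed
  next
    assume "\<exists>l :: nat \<Rightarrow> complex.
             (\<forall>n\<in>{1..N-1}. exp (l n) = xi N q n) \<and>
             (\<forall>n\<in>{1..N-1}. cnj (l n) = l ((N - n) mod N)) \<and>
             (\<forall>m\<in>{1..N-1}. tcoef N l m \<in> \<real> \<and> Re (tcoef N l m) \<ge> 0)"
    then obtain l where H: "(\<forall>n\<in>{1..N-1}. exp (l n) = xi N q n) \<and>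
             (\<forall>n\<in>{1..N-1}. cnj (l n) = l ((N - n) mod N)) \<and>
             (\<forall>m\<in>{1..N-1}. tcoef N l m \<in> \<real> \<and> Re (tcoef N l m) \<ge> 0)" by blast
    show "in_AC N (circulant N q)"
      unfolding in_AC_def
    proof (intro exI[of _ "\<lambda>m. Re (tcoef N l m)"] conjI ballI)
      fix m assume "m \<in> {1..N-1}"
      then show "0 \<le> Re (tcoef N l m)" using H by blast
    next
      show "mat_eq N (circulant N q) (mat_exp N (\<lambda>i j. \<Sum>m=1..N-1. complex_of_real (Re (tcoef N l m)) * Kgen N m i j))"
        using P2 H by blast
    qed
  qed
  show ?thesis by (rule conjI[OF P1 P2])
qed

end
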